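(* Let $(F,+,\cdot)$ be a left near-field and let $((K,\boxplus,\boxdot),(K,\cdot))$ be an elementary near-vector space associated with $(F,+,\cdot)$. Then $1\in Q(K)$, so $\boxplus_1:=+_1$ is defined, and there exists a right quasi-multiplicative bijection $\phi:(K,\cdot)\to(F,\cdot)$ such that $\alpha\boxplus_1\beta=\phi^{-1}(\phi(\alpha)+\phi(\beta))$ for all $\alpha,\beta\in K$; moreover $(K,\boxplus_1,\cdot)$ is a left near-field.
   Context: A scalar group is a tuple $(F,\cdot,1,0,-1)$ where $(F,\cdot,1)$ is a monoid, $0\ne1$, $0\alpha=\alpha0=0$, $\{1,-1\}$ is exactly the solution set of $x^2=1$, and $(F\setminus\{0\},\cdot)$ is a group. A left near-field $(F,+,\cdot)$: $(F,+)$ a group with identity $0$, $(F\setminus\{0\},\cdot)$ a group, $0\cdot\alpha=0$, $\gamma(\alpha+\beta)=\gamma\alpha+\gamma\beta$. A (left) near-vector space $((V,\boxplus,\boxdot),(F,\cdot))$: $(F,\cdot)$ scalar group, $(V,\boxplus)$ abelian group, $\boxdot:F\times V\to V$ with $1\boxdot v=v$, $\alpha\boxdot(\beta\boxdot v)=(\alpha\beta)\boxdot v$, $\alpha\boxdot(v\boxplus w)=\alpha\boxdot v\boxplus\alpha\boxdot w$, $(-1)\boxdot v=\boxminus v$, $0\boxdot v=0$, freeness, and quasi-kernel $Q(V)=\{v:\forall\alpha,\beta\,\exists\gamma,\ \alpha\boxdot v\boxplus\beta\boxdot v=\gamma\boxdot v\}$ generating $V$; for $u\in Q(V)\setminus\{0\}$,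 $\alpha+_u\beta$ is the unique $\gamma$ with $\alpha\boxdot u\boxplus\beta\boxdot u=\gamma\boxdot u$. An isomorphism $(\Psi,\varphi)$ of near-vector spaces: additive bijection $\Psi$ and group isomorphism $\varphi$ between the nonzero scalars with $\Psi(\alpha\boxdot_1u)=\varphi(\alpha)\boxdot_2\Psi(u)$. The canonical near-vector space of $(F,+,\cdot)$ is $((F,+,\cdot),(F,\cdot))$. An elementary near-vector space associated with a left near-field $(F,+,\cdot)$ is a near-vector space of the form $((K,\boxplus,\boxdot),(K,\cdot))$ (vectors and scalars on the same set $K$) isomorphic to the canonical near-vector space of $(F,+,\cdot)$. A right quasi-multiplicative bijection $\phi:(K,\cdot)\to(F,\cdot)$ is a bijection of the form $\phi(\alpha)=\varphi(\alpha)\lambda$ with $\varphi$ a multiplicative bijection (bijective monoid morphism) and $\lambda\in F\setminus\{0\}$. *)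

theory Defs
  imports Main
begin

definition group_on :: "'a set \<Rightarrow> ('a \<Rightarrow> 'a \<Rightarrow> 'a) \<Rightarrow> 'a \<Rightarrow> bool" where
  "group_on S f e \<longleftrightarrow>
     e \<in> S \<and> (\<forall>a\<in>S. \<forall>b\<in>S. f a b \<in> S) \<and>
     (\<forall>a\<in>S. \<forall>b\<in>S. \<forall>c\<in>S. f (f a b) c = f a (f b c)) \<and>
     (\<forall>a\<in>S. f e a = a \<and> f a e = a) \<and>
     (\<forall>a\<in>S. \<exists>b\<in>S. f a b = e \<and> f b a = e)"

text \<open>Scalar group (K, mult, one, zero, neg), neg playing the role of -1.\<close>
definition scalar_group :: "'k set \<Rightarrow> ('k \<Rightarrow> 'k \<Rightarrow> 'k) \<Rightarrow> 'k \<Rightarrow> 'k \<Rightarrow> 'k \<Rightarrow> bool" where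
  "scalar_group K mult one zero neg \<longleftrightarrow>
     one \<in> K \<and> zero \<in> K \<and> neg \<in> K \<and>
     (\<forall>a\<in>K. \<forall>b\<in>K. mult a b \<in> K) \<and>
     (\<forall>a\<in>K. \<forall>b\<in>K. \<forall>c\<in>K. mult (mult a b) c = mult a (mult b c)) \<and>
     (\<forall>a\<in>K. mult one a = a \<and> mult a one = a) \<and>
     zero \<noteq> one \<and>
     (\<forall>a\<in>K. mult zero a = zero \<and> mult a zero = zero) \<and>
     {x\<in>K. mult x x = one} = {one, neg} \<and>
     group_on (K - {zero}) mult one"

definition left_near_field :: "'f set \<Rightarrow> ('f \<Rightarrow> 'f \<Rightarrow> 'f) \<Rightarrow> ('f \<Rightarrow> 'f \<Rightarrow> 'f) \<Rightarrow> 'f \<Rightarrow> bool" where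
  "left_near_field F add mult zero \<longleftrightarrow>
     group_on F add zero \<and>
     (\<forall>a\<in>F. \<forall>b\<in>F. mult a b \<in> F) \<and>
     (\<exists>e. group_on (F - {zero}) mult e) \<and>
     (\<forall>a\<in>F. mult zero a = zero) \<and>
     (\<forall>a\<in>F. \<forall>b\<in>F. \<forall>c\<in>F. mult c (add a b) = add (mult c a) (mult c b))"

definition nf_one :: "'f set \<Rightarrow> ('f \<Rightarrow> 'f \<Rightarrow> 'f) \<Rightarrow> 'f \<Rightarrow> 'f" where
  "nf_one F mult zero = (THE e. group_on (F - {zero}) mult e)"

definition quasi_kernel :: "'v set \<Rightarrow> ('v \<Rightarrow> 'v \<Rightarrow> 'v) \<Rightarrow> 'k set \<Rightarrow> ('k \<Rightarrow> 'v \<Rightarrow> 'v) \<Rightarrow> 'v set" where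
  "quasi_kernel V vadd K smult =
     {v\<in>V. \<forall>a\<in>K. \<forall>b\<in>K. \<exists>c\<in>K. vadd (smult a v) (smult b v) = smult c v}"

definition add_at :: "'k set \<Rightarrow> ('v \<Rightarrow> 'v \<Rightarrow> 'v) \<Rightarrow> ('k \<Rightarrow> 'v \<Rightarrow> 'v) \<Rightarrow> 'v \<Rightarrow> 'k \<Rightarrow> 'k \<Rightarrow> 'k" where
  "add_at K vadd smult u a b = (THE c. c \<in> K \<and> vadd (smult a u) (smult b u) = smult c u)"

definition gen_subgroup :: "'v set \<Rightarrow> ('v \<Rightarrow> 'v \<Rightarrow> 'v) \<Rightarrow> 'v \<Rightarrow> 'v set \<Rightarrow> 'v set" where
  "gen_subgroup V vadd vzero A =
     \<Inter>{H. H \<subseteq> V \<and> A \<subseteq> H \<and> vzero \<in> H \<and> (\<forall>u\<in>H. \<forall>w\<in>H. vadd u w \<in> H) \<and>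
          (\<forall>u\<in>H. \<exists>w\<in>H. vadd u w = vzero)}"

definition near_vector_space ::
  "'v set \<Rightarrow> ('v \<Rightarrow> 'v \<Rightarrow> 'v) \<Rightarrow> 'v \<Rightarrow> ('k \<Rightarrow> 'v \<Rightarrow> 'v) \<Rightarrow>
   'k set \<Rightarrow> ('k \<Rightarrow> 'k \<Rightarrow> 'k) \<Rightarrow> 'k \<Rightarrow> 'k \<Rightarrow> 'k \<Rightarrow> bool" where
  "near_vector_space V vadd vzero smult K mult one zero neg \<longleftrightarrow>
     scalar_group K mult one zero neg \<and>
     group_on V vadd vzero \<and> (\<forall>u\<in>V. \<forall>w\<in>V. vadd u w = vadd w u) \<and>
     (\<forall>a\<in>K. \<forall>v\<in>V. smult a v \<in> V) \<and>
     (\<forall>v\<in>V. smult one v = v) \<and>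
     (\<forall>a\<in>K. \<forall>b\<in>K. \<forall>v\<in>V. smult a (smult b v) = smult (mult a b) v) \<and>
     (\<forall>a\<in>K. \<forall>v\<in>V. \<forall>w\<in>V. smult a (vadd v w) = vadd (smult a v) (smult a w)) \<and>
     (\<forall>v\<in>V. vadd (smult neg v) v = vzero) \<and>
     (\<forall>v\<in>V. smult zero v = vzero) \<and>
     (\<forall>a\<in>K. \<forall>b\<in>K. \<forall>v\<in>V. smult a v = smult b v \<longrightarrow> v = vzero \<or> a = b) \<and>
     gen_subgroup V vadd vzero (quasi_kernel V vadd K smult) = V"

text \<open>Isomorphism (Psi, phi) of near-vector spaces (only the data used in the definition).\<close>
definition nvs_iso ::
  "'v set \<Rightarrow> ('v \<Rightarrow> 'v \<Rightarrow> 'v) \<Rightarrow> ('k \<Rightarrow> 'v \<Rightarrow> 'v) \<Rightarrow> 'k set \<Rightarrow> ('k \<Rightarrow> 'k \<Rightarrow> 'k) \<Rightarrow> 'k \<Rightarrow>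
   'w set \<Rightarrow> ('w \<Rightarrow> 'w \<Rightarrow> 'w) \<Rightarrow> ('l \<Rightarrow> 'w \<Rightarrow> 'w) \<Rightarrow> 'l set \<Rightarrow> ('l \<Rightarrow> 'l \<Rightarrow> 'l) \<Rightarrow> 'l \<Rightarrow>
   ('v \<Rightarrow> 'w) \<Rightarrow> ('k \<Rightarrow> 'l) \<Rightarrow> bool" where
  "nvs_iso V1 vadd1 smult1 K1 mult1 zero1 V2 vadd2 smult2 K2 mult2 zero2 Psi phi \<longleftrightarrow>
     bij_betw Psi V1 V2 \<and>
     (\<forall>u\<in>V1. \<forall>w\<in>V1. Psi (vadd1 u w) = vadd2 (Psi u) (Psi w)) \<and>
     bij_betw phi (K1 - {zero1}) (K2 - {zero2}) \<and>
     (\<forall>a\<in>K1 - {zero1}. \<forall>b\<in>K1 - {zero1}. phi (mult1 a b) = mult2 (phi a) (phi b)) \<and>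
     (\<forall>a\<in>K1 - {zero1}. \<forall>u\<in>V1. Psi (smult1 a u) = smult2 (phi a) (Psi u))"

text \<open>Elementary near-vector space ((K, vadd, smult), (K, mult, one, zero, neg)) associated with
  the left near-field (F, fadd, fmult) (additive identity fzero): vectors and scalars live on the
  same set K (sharing the zero element), and it is isomorphic to the canonical near-vector
  space ((F, fadd, fmult), (F, fmult)).\<close>
definition elementary_nvs ::
  "'k set \<Rightarrow> ('k \<Rightarrow> 'k \<Rightarrow> 'k) \<Rightarrow> ('k \<Rightarrow> 'k \<Rightarrow> 'k) \<Rightarrow> ('k \<Rightarrow> 'k \<Rightarrow> 'k) \<Rightarrow> 'k \<Rightarrow> 'k \<Rightarrow> 'k \<Rightarrow>
   'f set \<Rightarrow> ('f \<Rightarrow> 'f \<Rightarrow> 'f) \<Rightarrow> ('f \<Rightarrow> 'f \<Rightarrow> 'f) \<Rightarrow> 'f \<Rightarrow> bool" where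
  "elementary_nvs K vadd smult mult one zero neg F fadd fmult fzero \<longleftrightarrow>
     near_vector_space K vadd zero smult K mult one zero neg \<and>
     (\<exists>Psi phi. nvs_iso K vadd smult K mult zero F fadd fmult F fmult fzero Psi phi)"

definition right_qm_bij ::
  "'k set \<Rightarrow> ('k \<Rightarrow> 'k \<Rightarrow> 'k) \<Rightarrow> 'k \<Rightarrow> 'f set \<Rightarrow> ('f \<Rightarrow> 'f \<Rightarrow> 'f) \<Rightarrow> 'f \<Rightarrow> 'f \<Rightarrow> ('k \<Rightarrow> 'f) \<Rightarrow> bool" where
  "right_qm_bij K mult one F fmult fone fzero phi \<longleftrightarrow>
     bij_betw phi K F \<and>
     (\<exists>vphi lam. bij_betw vphi K F \<and>
        (\<forall>a\<in>K. \<forall>b\<in>K. vphi (mult a b) = fmult (vphi a) (vphi b)) \<and>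
        vphi one = fone \<and>
        lam \<in> F - {fzero} \<and>
        (\<forall>a\<in>K. phi a = fmult (vphi a) lam))"

end

theory Submission
  imports Defs
begin

lemma group_on_id_unique:
  assumes "group_on S f e" "group_on S f e'" shows "e = e'"
  using assms unfolding group_on_def by metis

lemma group_on_idem:
  assumes "group_on S f e" "x \<in> S" "f x x = x" shows "x = e"
proof -
  obtain y where y: "y \<in> S" "f y x = e" using assms unfolding group_on_def by blast
  have "x = f e x" using assms unfolding group_on_def by auto
  also have "\<dots> = f (f y x) x" using y by simp
  also have "\<dots> = f y (f x x)" using assms y unfolding group_on_def by auto
  also have "\<dots> = e" using assms y by simp
  finally show ?thesis .
qed

lemma nf_mult_zero:
  assumes "left_near_field F fadd fmult fzero" "x \<in> F"
  shows "fmult x fzero = fzero"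
proof -
  have G: "group_on F fadd fzero" and C: "\<forall>a\<in>F. \<forall>b\<in>F. fmult a b \<in> F"
    and D: "\<forall>a\<in>F. \<forall>b\<in>F. \<forall>c\<in>F. fmult c (fadd a b) = fadd (fmult c a) (fmult c b)"
    using assms(1) unfolding left_near_field_def by auto
  have z: "fzero \<in> F" using G unfolding group_on_def by auto
  define z' where "z' = fmult x fzero"
  have zF: "z' \<in> F" using C z assms(2) z'_def by auto
  have "z' = fmult x (fadd fzero fzero)" using G z unfolding group_on_def z'_def by auto
  hence zz: "z' = fadd z' z'" using D z assms(2) z'_def by auto
  show ?thesis using group_on_idem[OF G zF zz[symmetric]] z'_def by simp
qed

lemma nf_nonzero_mult:
  assumes "left_near_field F fadd fmult fzero" "x \<in> F" "y \<in> F" "x \<noteq> fzero" "y \<noteq> fzero"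
  shows "fmult x y \<noteq> fzero"
proof -
  obtain e where "group_on (F - {fzero}) fmult e" using assms(1) unfolding left_near_field_def by auto
  thus ?thesis using assms unfolding group_on_def by auto
qed

lemma nf_right_bij:
  assumes L: "left_near_field F fadd fmult fzero" and p: "p \<in> F" "p \<noteq> fzero"
  shows "bij_betw (\<lambda>x. fmult x p) F F"
proof -
  have C: "\<forall>a\<in>F. \<forall>b\<in>F. fmult a b \<in> F" and Z: "\<forall>a\<in>F. fmult fzero a = fzero"
    and zF: "fzero \<in> F"
    using L unfolding left_near_field_def group_on_def by auto
  obtain e where E: "group_on (F - {fzero}) fmult e" using L unfolding left_near_field_def by auto
  obtain q where q: "q \<in> F" "q \<noteq> fzero" "fmult p q = e" "fmult q p = e"
  proof -
    have "p \<in> F - {fzero}" using p by auto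
    then obtain q where "q \<in> F - {fzero}" "fmult p q = e \<and> fmult q p = e"
      using E unfolding group_on_def by meson
    thus ?thesis using that by auto
  qed
  have assoc: "\<And>a b c. a \<in> F - {fzero} \<Longrightarrow> b \<in> F - {fzero} \<Longrightarrow> c \<in> F - {fzero} \<Longrightarrow>
     fmult (fmult a b) c = fmult a (fmult b c)" using E unfolding group_on_def by blast
  have eid: "\<And>a. a \<in> F - {fzero} \<Longrightarrow> fmult a e = a" using E unfolding group_on_def by blast
  show ?thesis unfolding bij_betw_def
  proof
    show "inj_on (\<lambda>x. fmult x p) F"
    proof (rule inj_onI)
      fix x y assume xy: "x \<in> F" "y \<in> F" "fmult x p = fmult y p"
      show "x = y"
      proof (cases "x = fzero \<or> y = fzero")
        case True
        thus ?thesis using xy nf_nonzero_mult[OF L] p Z by metis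
      next
        case False
        have "x = fmult (fmult x p) q" using assoc[of x p q] False xy q p eid by auto
        also have "\<dots> = fmult (fmult y p) q" using xy by simp
        also have "\<dots> = y" using assoc[of y p q] False xy q p eid by auto
        finally show ?thesis .
      qed
    qed
    show "(\<lambda>x. fmult x p) ` F = F"
    proof
      show "(\<lambda>x. fmult x p) ` F \<subseteq> F" using C p by auto
      show "F \<subseteq> (\<lambda>x. fmult x p) ` F"
      proof
        fix y assume y: "y \<in> F"
        show "y \<in> (\<lambda>x. fmult x p) ` F"
        proof (cases "y = fzero")
          case True thus ?thesis using Z p zF by (metis image_eqI)
        next
          case False
          have "fmult (fmult y q) p = y" using assoc[of y q p] False y q p eid by auto
          moreover have "fmult y q \<in> F" using C y q by auto
          ultimately show ?thesis by (metis image_eqI)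
        qed
      qed
    qed
  qed
qed


theorem mainTheorem11:
  fixes F :: "'f set" and fadd fmult :: "'f \<Rightarrow> 'f \<Rightarrow> 'f" and fzero :: 'f
    and K :: "'k set" and vadd smult mult :: "'k \<Rightarrow> 'k \<Rightarrow> 'k" and one zero neg :: 'k
  assumes "left_near_field F fadd fmult fzero"
    and "elementary_nvs K vadd smult mult one zero neg F fadd fmult fzero"
  shows "one \<in> quasi_kernel K vadd K smult \<and>
         (\<exists>phi. right_qm_bij K mult one F fmult (nf_one F fmult fzero) fzero phi \<and>
            (\<forall>a\<in>K. \<forall>b\<in>K. add_at K vadd smult one a b =
                 the_inv_into K phi (fadd (phi a) (phi b)))) \<and>
         left_near_field K (add_at K vadd smult one) mult zero"
proof -
  note L = assms(1)
  have FG: "group_on F fadd fzero" and FC: "\<forall>a\<in>F. \<forall>b\<in>F. fmult a b \<in> F"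
    and F0: "\<forall>a\<in>F. fmult fzero a = fzero"
    using L unfolding left_near_field_def by auto
  obtain e where E: "group_on (F - {fzero}) fmult e" using L unfolding left_near_field_def by auto
  have nfone: "nf_one F fmult fzero = e"
    unfolding nf_one_def using E group_on_id_unique by (metis the_equality)
  have zF: "fzero \<in> F" using FG unfolding group_on_def by auto
  obtain Psi phi0 where I: "nvs_iso K vadd smult K mult zero F fadd fmult F fmult fzero Psi phi0"
    using assms(2) unfolding elementary_nvs_def by auto
  have NVS: "near_vector_space K vadd zero smult K mult one zero neg"
    using assms(2) unfolding elementary_nvs_def by auto
  have SG: "scalar_group K mult one zero neg" using NVS unfolding near_vector_space_def by auto
  have KG: "group_on K vadd zero" and sK: "\<forall>a\<in>K. \<forall>v\<in>K. smult a v \<in> K"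
    and sA: "\<forall>a\<in>K. \<forall>b\<in>K. \<forall>v\<in>K. smult a (smult b v) = smult (mult a b) v"
    and sD: "\<forall>a\<in>K. \<forall>v\<in>K. \<forall>w\<in>K. smult a (vadd v w) = vadd (smult a v) (smult a w)"
    and s0: "\<forall>v\<in>K. smult zero v = zero"
    using NVS unfolding near_vector_space_def by auto
  have oneK: "one \<in> K" and zeroK: "zero \<in> K" and zo: "zero \<noteq> one"
    and mK: "\<forall>a\<in>K. \<forall>b\<in>K. mult a b \<in> K"
    and m0: "\<forall>a\<in>K. mult zero a = zero \<and> mult a zero = zero"
    and MG: "group_on (K - {zero}) mult one"
    using SG unfolding scalar_group_def by auto
  have PsiB: "bij_betw Psi K F" and PsiA: "\<forall>u\<in>K. \<forall>w\<in>K. Psi (vadd u w) = fadd (Psi u) (Psi w)"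
    and phiB: "bij_betw phi0 (K - {zero}) (F - {fzero})"
    and phiM: "\<forall>a\<in>K - {zero}. \<forall>b\<in>K - {zero}. phi0 (mult a b) = fmult (phi0 a) (phi0 b)"
    and PsiS: "\<forall>a\<in>K - {zero}. \<forall>u\<in>K. Psi (smult a u) = fmult (phi0 a) (Psi u)"
    using I unfolding nvs_iso_def by auto
  have Psi0: "Psi zero = fzero"
  proof -
    have "Psi zero = Psi (vadd zero zero)" using KG zeroK unfolding group_on_def by auto
    hence "Psi zero = fadd (Psi zero) (Psi zero)" using PsiA zeroK by auto
    moreover have "Psi zero \<in> F" by (rule bij_betw_apply[OF PsiB zeroK])
    ultimately show ?thesis using group_on_idem[OF FG] by simp
  qed
  define vphi where "vphi = (\<lambda>a. if a = zero then fzero else phi0 a)"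
  have vphiF: "\<And>a. a \<in> K \<Longrightarrow> vphi a \<in> F"
    using phiB zF unfolding vphi_def bij_betw_def by auto
  have vphiB: "bij_betw vphi K F"
  proof -
    have "inj_on vphi K"
    proof (rule inj_onI)
      fix x y assume xy: "x \<in> K" "y \<in> K" "vphi x = vphi y"
      have pI: "inj_on phi0 (K - {zero})" and pim: "phi0 ` (K - {zero}) = F - {fzero}"
        using phiB unfolding bij_betw_def by auto
      show "x = y"
      proof (cases "x = zero")
        case True
        show ?thesis
        proof (rule ccontr)
          assume "x \<noteq> y"
          hence "y \<in> K - {zero}" using True xy by auto
          hence "phi0 y \<in> F - {fzero}" using pim by blast
          thus False using xy True \<open>x \<noteq> y\<close> unfolding vphi_def by auto
        qed
      next
        case False
        hence xK: "x \<in> K - {zero}" using xy by auto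
        hence px: "phi0 x \<in> F - {fzero}" using pim by blast
        show ?thesis
        proof (cases "y = zero")
          case True thus ?thesis using xy False px unfolding vphi_def by auto
        next
          case F2: False
          hence "y \<in> K - {zero}" using xy by auto
          moreover have "phi0 x = phi0 y" using xy False F2 unfolding vphi_def by auto
          ultimately show ?thesis using pI xK unfolding inj_on_def by blast
        qed
      qed
    qed
    moreover have "vphi ` K = F"
    proof
      show "vphi ` K \<subseteq> F" using vphiF by auto
      show "F \<subseteq> vphi ` K"
      proof
        fix y assume y: "y \<in> F"
        show "y \<in> vphi ` K"
        proof (cases "y = fzero")
          case True
          have "vphi zero = y" using True unfolding vphi_def by simp
          thus ?thesis using zeroK by (intro rev_image_eqI[of zero]) auto
        next
          case False
          hence "y \<in> phi0 ` (K - {zero})" using y phiB unfolding bij_betw_def by simp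
          then obtain x where x: "x \<in> K - {zero}" "phi0 x = y" by blast
          hence "vphi x = y" unfolding vphi_def by simp
          thus ?thesis using x(1) by (intro rev_image_eqI[of x]) auto
        qed
      qed
    qed
    ultimately show ?thesis unfolding bij_betw_def by auto
  qed
  have vphiM: "\<forall>a\<in>K. \<forall>b\<in>K. vphi (mult a b) = fmult (vphi a) (vphi b)"
  proof (intro ballI)
    fix a b assume ab: "a \<in> K" "b \<in> K"
    show "vphi (mult a b) = fmult (vphi a) (vphi b)"
    proof (cases "a = zero \<or> b = zero")
      case True
      have "vphi a \<in> F" "vphi b \<in> F" using vphiF ab by auto
      moreover have "vphi zero = fzero" unfolding vphi_def by simp
      ultimately show ?thesis using True m0 ab F0 nf_mult_zero[OF L] by auto
    next
      case False
      have "mult a b \<in> K - {zero}" using MG ab False unfolding group_on_def by auto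
      thus ?thesis using False phiM ab unfolding vphi_def by auto
    qed
  qed
  have vphi1: "vphi one = e"
  proof -
    have "vphi one = fmult (vphi one) (vphi one)" using vphiM oneK MG unfolding group_on_def
      by (metis DiffI empty_iff insert_iff zo)
    moreover have "vphi one \<in> F - {fzero}" using phiB oneK zo unfolding vphi_def bij_betw_def by auto
    ultimately show ?thesis using group_on_idem[OF E] by metis
  qed
  have PsiS': "\<forall>a\<in>K. \<forall>u\<in>K. Psi (smult a u) = fmult (vphi a) (Psi u)"
  proof (intro ballI)
    fix a u assume au: "a \<in> K" "u \<in> K"
    show "Psi (smult a u) = fmult (vphi a) (Psi u)"
    proof (cases "a = zero")
      case True thus ?thesis using s0 au Psi0 F0 PsiB bij_betw_apply unfolding vphi_def by fastforce
    next
      case False thus ?thesis using PsiS au unfolding vphi_def by auto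
    qed
  qed
  define p where "p = Psi one"
  have pF: "p \<in> F" "p \<noteq> fzero"
    using PsiB oneK zeroK zo Psi0 unfolding p_def bij_betw_def inj_on_def by auto
  define phi where "phi = (\<lambda>a. fmult (vphi a) p)"
  have phiPsi: "\<And>a. a \<in> K \<Longrightarrow> phi a = Psi (smult a one)"
    using PsiS' oneK unfolding phi_def p_def by auto
  have phiBij: "bij_betw phi K F"
    unfolding phi_def using bij_betw_trans[OF vphiB nf_right_bij[OF L pF]] by (simp add: comp_def)
  have phiF: "\<And>a. a \<in> K \<Longrightarrow> phi a \<in> F" using bij_betw_apply[OF phiBij] by blast
  have phiI: "inj_on phi K" using phiBij bij_betw_def by blast
  have phi0z: "phi zero = fzero" using F0 pF unfolding phi_def vphi_def by auto
  have smK: "\<And>a. a \<in> K \<Longrightarrow> smult a one \<in> K" using sK oneK by auto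
  have PsiI: "inj_on Psi K" using PsiB bij_betw_def by blast
  have free: "\<forall>a\<in>K. \<forall>b\<in>K. \<forall>v\<in>K. smult a v = smult b v \<longrightarrow> v = zero \<or> a = b"
    using NVS unfolding near_vector_space_def by auto
  have vK: "\<forall>u\<in>K. \<forall>w\<in>K. vadd u w \<in> K" using KG unfolding group_on_def by auto
  have FA: "\<forall>u\<in>F. \<forall>w\<in>F. fadd u w \<in> F" using FG unfolding group_on_def by auto
  have ex: "\<And>a b. a \<in> K \<Longrightarrow> b \<in> K \<Longrightarrow> \<exists>c\<in>K. vadd (smult a one) (smult b one) = smult c one"
  proof -
    fix a b assume ab: "a \<in> K" "b \<in> K"
    have "fadd (phi a) (phi b) \<in> F" using FA phiF ab by blast
    then obtain c where c: "c \<in> K" "phi c = fadd (phi a) (phi b)"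
      using phiBij unfolding bij_betw_def by (metis imageE)
    have "Psi (smult c one) = Psi (vadd (smult a one) (smult b one))"
      using c ab phiPsi PsiA smK by auto
    hence "smult c one = vadd (smult a one) (smult b one)"
      using PsiI smK c ab vK unfolding inj_on_def by blast
    thus "\<exists>c\<in>K. vadd (smult a one) (smult b one) = smult c one" using c(1) by metis
  qed
  have uniq: "\<And>a b c. a \<in> K \<Longrightarrow> b \<in> K \<Longrightarrow> c \<in> K \<Longrightarrow>
      vadd (smult a one) (smult b one) = smult c one \<Longrightarrow> add_at K vadd smult one a b = c"
  proof -
    fix a b c assume abc: "a \<in> K" "b \<in> K" "c \<in> K" "vadd (smult a one) (smult b one) = smult c one"
    show "add_at K vadd smult one a b = c"
      unfolding add_at_def
    proof (rule the_equality)
      show "c \<in> K \<and> vadd (smult a one) (smult b one) = smult c one" using abc by auto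
      fix d assume "d \<in> K \<and> vadd (smult a one) (smult b one) = smult d one"
      hence "d \<in> K" "smult d one = smult c one" using abc by auto
      thus "d = c" using free[rule_format, of d c one] abc oneK zo by auto
    qed
  qed
  have addK: "\<And>a b. a \<in> K \<Longrightarrow> b \<in> K \<Longrightarrow> add_at K vadd smult one a b \<in> K \<and>
      vadd (smult a one) (smult b one) = smult (add_at K vadd smult one a b) one"
  proof -
    fix a b assume ab: "a \<in> K" "b \<in> K"
    obtain c where c: "c \<in> K" "vadd (smult a one) (smult b one) = smult c one" using ex[OF ab] by blast
    have "add_at K vadd smult one a b = c" using uniq[OF ab c] .
    thus "add_at K vadd smult one a b \<in> K \<and>
      vadd (smult a one) (smult b one) = smult (add_at K vadd smult one a b) one" using c by simp
  qed
  have addphi: "\<And>a b. a \<in> K \<Longrightarrow> b \<in> K \<Longrightarrow>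
      phi (add_at K vadd smult one a b) = fadd (phi a) (phi b)"
  proof -
    fix a b assume ab: "a \<in> K" "b \<in> K"
    have d: "add_at K vadd smult one a b \<in> K"
      "vadd (smult a one) (smult b one) = smult (add_at K vadd smult one a b) one" using addK[OF ab] by auto
    have "phi (add_at K vadd smult one a b) = Psi (smult (add_at K vadd smult one a b) one)"
      using phiPsi[OF d(1)] .
    also have "\<dots> = Psi (vadd (smult a one) (smult b one))" using d(2) by simp
    also have "\<dots> = fadd (Psi (smult a one)) (Psi (smult b one))" using PsiA smK ab by blast
    also have "\<dots> = fadd (phi a) (phi b)" using phiPsi ab by simp
    finally show "phi (add_at K vadd smult one a b) = fadd (phi a) (phi b)" .
  qed
  have Q: "one \<in> quasi_kernel K vadd K smult"
    unfolding quasi_kernel_def using oneK ex by auto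
  have RQ: "right_qm_bij K mult one F fmult (nf_one F fmult fzero) fzero phi"
    unfolding right_qm_bij_def nfone
    using phiBij vphiB vphiM vphi1 pF unfolding phi_def by blast
  have inv: "\<forall>a\<in>K. \<forall>b\<in>K. add_at K vadd smult one a b = the_inv_into K phi (fadd (phi a) (phi b))"
  proof (intro ballI)
    fix a b assume ab: "a \<in> K" "b \<in> K"
    show "add_at K vadd smult one a b = the_inv_into K phi (fadd (phi a) (phi b))"
      using the_inv_into_f_eq[OF phiI addphi[OF ab]] addK[OF ab] by simp
  qed
  have GK: "group_on K (add_at K vadd smult one) zero"
  proof -
    let ?a = "add_at K vadd smult one"
    have cl: "\<forall>a\<in>K. \<forall>b\<in>K. ?a a b \<in> K" using addK by auto
    have as: "\<forall>a\<in>K. \<forall>b\<in>K. \<forall>c\<in>K. ?a (?a a b) c = ?a a (?a b c)"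
    proof (intro ballI)
      fix a b c assume abc: "a \<in> K" "b \<in> K" "c \<in> K"
      have fa: "\<forall>a\<in>F. \<forall>b\<in>F. \<forall>c\<in>F. fadd (fadd a b) c = fadd a (fadd b c)"
        using FG unfolding group_on_def by blast
      have "phi (?a (?a a b) c) = fadd (fadd (phi a) (phi b)) (phi c)"
        using addphi cl abc by simp
      also have "\<dots> = fadd (phi a) (fadd (phi b) (phi c))" using fa phiF abc by simp
      also have "\<dots> = phi (?a a (?a b c))" using addphi cl abc by simp
      finally have "phi (?a (?a a b) c) = phi (?a a (?a b c))" .
      thus "?a (?a a b) c = ?a a (?a b c)" using phiI cl abc unfolding inj_on_def by blast
    qed
    have idl: "\<forall>a\<in>K. ?a zero a = a \<and> ?a a zero = a"
    proof
      fix a assume a: "a \<in> K"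
      have "phi a \<in> F" using a phiF by blast
      hence "phi (?a zero a) = phi a \<and> phi (?a a zero) = phi a"
        using addphi a zeroK phi0z FG unfolding group_on_def by auto
      thus "?a zero a = a \<and> ?a a zero = a" using phiI cl a zeroK unfolding inj_on_def by blast
    qed
    have iv: "\<forall>a\<in>K. \<exists>b\<in>K. ?a a b = zero \<and> ?a b a = zero"
    proof
      fix a assume a: "a \<in> K"
      have "phi a \<in> F" using a phiF by blast
      then obtain y where y: "y \<in> F" "fadd (phi a) y = fzero" "fadd y (phi a) = fzero"
        using FG unfolding group_on_def by meson
      then obtain b where b: "b \<in> K" "phi b = y"
        using phiBij unfolding bij_betw_def by (metis imageE)
      have "phi (?a a b) = phi zero \<and> phi (?a b a) = phi zero"
        using addphi a b y phi0z by auto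
      hence "?a a b = zero \<and> ?a b a = zero" using phiI cl a b zeroK unfolding inj_on_def by blast
      thus "\<exists>b\<in>K. ?a a b = zero \<and> ?a b a = zero" using b by auto
    qed
    show ?thesis unfolding group_on_def using zeroK cl as idl iv by blast
  qed
  have dist: "\<forall>a\<in>K. \<forall>b\<in>K. \<forall>c\<in>K. mult c (add_at K vadd smult one a b)
      = add_at K vadd smult one (mult c a) (mult c b)"
  proof (intro ballI)
    fix a b c assume abc: "a \<in> K" "b \<in> K" "c \<in> K"
    let ?d = "add_at K vadd smult one a b"
    have d: "?d \<in> K" "vadd (smult a one) (smult b one) = smult ?d one" using addK abc by auto
    have "smult (mult c ?d) one = smult c (smult ?d one)" using sA abc d oneK by auto
    also have "\<dots> = vadd (smult c (smult a one)) (smult c (smult b one))"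
      using d(2)[symmetric] sD abc smK by auto
    also have "\<dots> = vadd (smult (mult c a) one) (smult (mult c b) one)" using sA abc oneK by auto
    finally show "mult c ?d = add_at K vadd smult one (mult c a) (mult c b)"
      using uniq[of "mult c a" "mult c b" "mult c ?d"] mK abc d by auto
  qed
  have LK: "left_near_field K (add_at K vadd smult one) mult zero"
    unfolding left_near_field_def using GK mK MG m0 dist by blast
  show ?thesis using Q RQ inv LK by blast
qed

end
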